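(* Let $\mathcal F=(\{U_n\},\{V_n\})$ be a frame and $\mathbb{P}$, $\Omega$ as in the context. For $\omega\in\Omega$ define the sequence of finite sets $(L^\omega_k)_{k\ge1}$ by concatenating, for $i=1,2,3,\dots$ in order, $U_{\omega_i}$ copies of $I_1$ followed by $V_{\omega_i}$ copies of $I_{2^d}$. Then for $\mathbb{P}$-almost every $\omega$ and every $t\ge0$, $$\liminf_{n\to\infty}\frac1n\log\sum_{w\in\prod_{k=1}^nL^\omega_k}2^{-nt}\le -t\log2.$$
   Context: $d\ge1$; $I_1=\{(0,\dots,0)\}\subset\{0,1\}^d$ and $I_{2^d}=\{0,1\}^d$. A frame is a pair $\mathcal F=(\{U_n\}_{n\in\mathbb{N}},\{V_n\}_{n\in\mathbb{N}})$ of sequences of positive integers with $U_1\ge1$ and, for all $n\in\mathbb{N}$, $nU_n\le V_n$ and $(U_n+V_n)^3\le U_{n+1}$. $\Omega=\mathbb{N}^{\mathbb{N}}$ carries the Bernoulli measure $\mathbb{P}$ with $\mathbb{P}([\omega_1\dots\omega_n])=p_{\omega_1}\cdots p_{\omega_n}$, where $p_n=\frac{1}{Cn^2}$, $C=\sum_{n\ge1}n^{-2}$. *)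

theory Defs
  imports "HOL-Probability.Probability"
begin

definition cube :: "nat \<Rightarrow> nat list set" where
  "cube d = {xs. length xs = d \<and> set xs \<subseteq> {0,1}}"

definition I_one :: "nat \<Rightarrow> nat list set" where
  "I_one d = {replicate d 0}"

definition I_full :: "nat \<Rightarrow> nat list set" where
  "I_full d = cube d"

text \<open>Frames: sequences indexed by n \<ge> 1 (values at index 0 are irrelevant).\<close>

definition is_frame :: "(nat \<Rightarrow> nat) \<Rightarrow> (nat \<Rightarrow> nat) \<Rightarrow> bool" where
  "is_frame U V \<longleftrightarrow> U 1 \<ge> 1 \<and>
     (\<forall>n\<ge>1. U n \<ge> 1 \<and> V n \<ge> 1 \<and> n * U n \<le> V n \<and> (U n + V n) ^ 3 \<le> U (n + 1))"

definition Cconst :: real where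
  "Cconst = (\<Sum>n. 1 / (real (Suc n))^2)"

definition pw :: "nat \<Rightarrow> real" where
  "pw n = (if n = 0 then 0 else 1 / (Cconst * (real n)^2))"

text \<open>Bernoulli measure on \<Omega> = \<nat>^\<nat>; omega i (i = 0,1,...) is the paper's \<omega>_{i+1}.\<close>

definition Pmeas :: "(nat \<Rightarrow> nat) measure" where
  "Pmeas = PiM UNIV (\<lambda>_. density (count_space UNIV) (\<lambda>n. ennreal (pw n)))"

definition blk_start :: "(nat \<Rightarrow> nat) \<Rightarrow> (nat \<Rightarrow> nat) \<Rightarrow> (nat \<Rightarrow> nat) \<Rightarrow> nat \<Rightarrow> nat" where
  "blk_start U V \<omega> i = (\<Sum>j<i. U (\<omega> j) + V (\<omega> j))"

definition blk_index :: "(nat \<Rightarrow> nat) \<Rightarrow> (nat \<Rightarrow> nat) \<Rightarrow> (nat \<Rightarrow> nat) \<Rightarrow> nat \<Rightarrow> nat" where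
  "blk_index U V \<omega> k = (LEAST i. k < blk_start U V \<omega> (Suc i))"

text \<open>L U V d \<omega> k is the paper's L^\<omega>_{k+1}: within block i, the first U_{\<omega>_i}
  positions carry I_1, the next V_{\<omega>_i} positions carry I_{2^d}.\<close>

definition Lseq :: "(nat \<Rightarrow> nat) \<Rightarrow> (nat \<Rightarrow> nat) \<Rightarrow> nat \<Rightarrow> (nat \<Rightarrow> nat) \<Rightarrow> nat \<Rightarrow> nat list set" where
  "Lseq U V d \<omega> k =
     (let i = blk_index U V \<omega> k in
      if k - blk_start U V \<omega> i < U (\<omega> i) then I_one d else I_full d)"

definition words :: "(nat \<Rightarrow> nat) \<Rightarrow> (nat \<Rightarrow> nat) \<Rightarrow> nat \<Rightarrow> (nat \<Rightarrow> nat) \<Rightarrow> nat \<Rightarrow> nat list list set" where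
  "words U V d \<omega> n = {w. length w = n \<and> (\<forall>k<n. w ! k \<in> Lseq U V d \<omega> k)}"

end

theory Submission
  imports Defs
begin

definition M0 :: "nat measure" where
  "M0 = density (count_space UNIV) (\<lambda>n. ennreal (pw n))"

lemma summable_inv_sq: "summable (\<lambda>n. 1 / (real (Suc n))^2)"
proof -
  have "summable (\<lambda>n. inverse (real n ^ 2))"
    by (rule inverse_power_summable) simp
  then have "summable (\<lambda>n. inverse (real (Suc n) ^ 2))"
    by (subst summable_Suc_iff)
  then show ?thesis by (simp add: inverse_eq_divide)
qed

lemma Cconst_pos: "Cconst > 0"
  unfolding Cconst_def
  by (rule suminf_pos[OF summable_inv_sq]) simp

lemma pw_nonneg: "pw n \<ge> 0"
  using Cconst_pos by (simp add: pw_def)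

lemma pw_sums: "pw sums 1"
proof -
  have "(\<lambda>n. (1/Cconst) * (1 / (real (Suc n))^2)) sums ((1/Cconst) * Cconst)"
    using summable_inv_sq[THEN summable_sums] unfolding Cconst_def[symmetric]
    by (rule sums_mult)
  then have "(\<lambda>n. pw (Suc n)) sums 1"
    using Cconst_pos by (simp add: pw_def)
  then show ?thesis by (subst (asm) sums_Suc_iff) (simp add: pw_def)
qed

lemma emeasure_M0: "emeasure M0 A = (\<Sum>n. ennreal (pw n * indicator A n))"
  unfolding M0_def
  by (simp add: emeasure_density nn_integral_count_space_nat ennreal_mult' ennreal_indicator pw_nonneg)

lemma sets_M0[simp]: "sets M0 = UNIV" and space_M0[simp]: "space M0 = UNIV"
  by (simp_all add: M0_def)

lemma prob_space_M0: "prob_space M0"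
proof
  have "emeasure M0 (space M0) = (\<Sum>n. ennreal (pw n))"
    by (simp add: emeasure_M0)
  also have "\<dots> = ennreal 1"
    using pw_sums by (simp add: suminf_ennreal2 pw_nonneg sums_summable sums_unique[symmetric])
  finally show "emeasure M0 (space M0) = 1" by simp
qed

lemma emeasure_M0_single: "emeasure M0 {m} = pw m"
proof -
  have "(\<Sum>n. ennreal (pw n * indicator {m} n)) = (\<Sum>n\<in>{m}. ennreal (pw n * indicator {m} n))"
    by (rule suminf_finite) auto
  then show ?thesis by (simp add: emeasure_M0)
qed

lemma Pmeas_eq: "Pmeas = PiM UNIV (\<lambda>_::nat. M0)"
  by (simp add: Pmeas_def M0_def)

interpretation M0P: prob_space M0
  by (rule prob_space_M0)

interpretation PP: product_prob_space "\<lambda>_::nat. M0" UNIV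
  by (intro product_prob_space.intro product_sigma_finite.intro product_prob_space_axioms.intro prob_space_imp_sigma_finite prob_space_M0)

lemma space_Pmeas[simp]: "space Pmeas = UNIV"
  by (simp add: Pmeas_eq space_PiM)

lemma prob_space_Pmeas: "prob_space Pmeas"
  unfolding Pmeas_eq by (rule PP.P.prob_space_axioms)

lemma meas_all_lt: "measure Pmeas {\<omega>. \<forall>j<T. \<omega> j < m} = (measure M0 {..<m}) ^ T"
proof -
  have "emeasure Pmeas {\<omega>\<in>space Pmeas. \<forall>j\<in>{..<T}. \<omega> j \<in> {..<m}} = (\<Prod>j\<in>{..<T}. emeasure M0 {..<m})"
    unfolding Pmeas_eq by (rule PP.emeasure_PiM_Collect) auto
  then have "emeasure Pmeas {\<omega>. \<forall>j<T. \<omega> j < m} = ennreal ((measure M0 {..<m}) ^ T)"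
    by (simp add: M0P.emeasure_eq_measure prod_ennreal ennreal_power Ball_def)
  then show ?thesis
    by (simp add: PP.P.emeasure_eq_measure Pmeas_eq)
qed

lemma meas_single: "measure Pmeas {\<omega>. P (\<omega> j)} = measure M0 {n. P n}"
proof -
  have "emeasure Pmeas {\<omega>\<in>space Pmeas. \<omega> j \<in> {n. P n}} = emeasure M0 {n. P n}"
    unfolding Pmeas_eq by (rule PP.emeasure_PiM_Collect_single) auto
  then show ?thesis
    by (simp add: PP.P.emeasure_eq_measure Pmeas_eq M0P.emeasure_eq_measure space_PiM)
qed

lemma comp_meas[measurable]: "(\<lambda>\<omega>. \<omega> j) \<in> measurable (PiM UNIV (\<lambda>_::nat. M0)) (count_space UNIV)"
proof -
  have "(\<lambda>\<omega>. \<omega> j) \<in> measurable (PiM UNIV (\<lambda>_::nat. M0)) M0"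
    by (rule measurable_component_singleton) simp
  moreover have "measurable (PiM UNIV (\<lambda>_::nat. M0)) M0 = measurable (PiM UNIV (\<lambda>_::nat. M0)) (count_space UNIV)"
    by (rule measurable_cong_sets) (auto simp: M0_def)
  ultimately show ?thesis by simp
qed

lemma meas_B: "{\<omega>. \<exists>i\<ge>N. (\<forall>j<i. \<omega> j < \<omega> i) \<and> ((Suc r)*i)^3 < U(\<omega> i)^2} \<in> sets Pmeas"
proof -
  have "{\<omega>. \<exists>i\<ge>N. (\<forall>j<i. \<omega> j < \<omega> i) \<and> ((Suc r)*i)^3 < U(\<omega> i)^2} =
        {\<omega>\<in>space (PiM UNIV (\<lambda>_::nat. M0)). \<exists>i\<ge>N. \<exists>v. \<omega> i = v \<and> ((Suc r)*i)^3 < U v ^2 \<and> (\<forall>j<i. \<omega> j < v)}"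
    by (auto simp: space_PiM)
  also have "\<dots> \<in> sets (PiM UNIV (\<lambda>_::nat. M0))"
    by measurable
  finally show ?thesis unfolding Pmeas_eq .
qed

definition q :: "nat \<Rightarrow> real" where "q m = measure M0 {m..}"

lemma q_compl: "measure M0 {..<m} = 1 - q m"
proof -
  have "measure M0 (space M0 - {m..}) = 1 - measure M0 {m..}"
    by (rule M0P.prob_compl) simp
  moreover have "space M0 - {m..} = {..<m}" by auto
  ultimately show ?thesis by (simp add: q_def)
qed

lemma q_nonneg: "0 \<le> q m" and q_le1: "q m \<le> 1"
  by (simp_all add: q_def)

lemma q_ge: "pw m \<le> q m"
proof -
  have "measure M0 {m} = pw m"
    using emeasure_M0_single[of m] by (simp add: M0P.emeasure_eq_measure pw_nonneg)
  moreover have "measure M0 {m} \<le> measure M0 {m..}"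
    by (rule M0P.finite_measure_mono) auto
  ultimately show ?thesis by (simp add: q_def)
qed

lemma q_lim: "q \<longlonglongrightarrow> 0"
proof -
  have "(\<lambda>m. measure M0 (atLeast m)) \<longlonglongrightarrow> measure M0 (\<Inter>m. atLeast m)"
    by (rule M0P.finite_Lim_measure_decseq) (auto simp: decseq_def)
  moreover have "(\<Inter>m. atLeast m) = ({}::nat set)" by (auto simp: atLeast_def) (metis Suc_n_not_le_n)
  ultimately show ?thesis by (simp add: q_def[abs_def])
qed

lemma AE_pos: "AE \<omega> in Pmeas. \<forall>j. 1 \<le> \<omega> j"
proof -
  have "emeasure M0 {0} = 0" by (simp add: emeasure_M0_single pw_def)
  then have "AE x in M0. x \<notin> {0}"
    by (intro AE_I'[of "{0}"]) (auto simp: null_sets_def)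
  then have "AE x in M0. 1 \<le> x" by (rule AE_mp) auto
  then have "\<And>j. AE \<omega> in Pmeas. 1 \<le> \<omega> j"
    unfolding Pmeas_eq by (intro PP.AE_component) auto
  then show ?thesis by (simp add: AE_all_countable)
qed

lemma meas_allN: "{\<omega>. \<forall>j<N. \<omega> j < m} \<in> sets Pmeas"
proof -
  have "{\<omega>. \<forall>j<N. \<omega> j < m} = {\<omega>\<in>space (PiM UNIV (\<lambda>_::nat. M0)). \<forall>j<N. \<omega> j < m}"
    by (auto simp: space_PiM)
  also have "\<dots> \<in> sets (PiM UNIV (\<lambda>_::nat. M0))"
    by measurable
  finally show ?thesis unfolding Pmeas_eq .
qed

lemma real_ineq1:
  fixes x :: real and N :: nat
  assumes "0 \<le> x" "x \<le> 1"
  shows "1 - N * x \<le> (1 - x)^N"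
  using Bernoulli_inequality[of "-x" N] assms by simp

lemma real_ineq2:
  fixes x :: real and T :: nat
  assumes "0 \<le> x" "x \<le> 1"
  shows "(1 - x)^T * (1 + T * x) \<le> 1"
proof -
  have "(1 - x)^T * (1 + T * x) \<le> (1 - x)^T * (1 + x)^T"
    using Bernoulli_inequality[of x T] assms by (intro mult_left_mono) auto
  also have "\<dots> = (1 - x*x)^T" by (simp add: power_mult_distrib[symmetric] algebra_simps)
  also have "\<dots> \<le> 1" using assms by (intro power_le_one) (auto simp: mult_le_one)
  finally show ?thesis .
qed

section \<open>Counting words\<close>

lemma words_gen_card:
  assumes "\<And>k. finite (A k)"
  shows "finite {w. length w = n \<and> (\<forall>k<n. w!k \<in> A k)} \<and>
         card {w. length w = n \<and> (\<forall>k<n. w!k \<in> A k)} = (\<Prod>k<n. card (A k))"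
proof (induction n)
  case 0
  have "{w. length w = 0 \<and> (\<forall>k<0. w!k \<in> A k)} = {[]}" by auto
  then show ?case by simp
next
  case (Suc n)
  let ?W = "\<lambda>n. {w. length w = n \<and> (\<forall>k<n. w!k \<in> A k)}"
  have eq: "?W (Suc n) = (\<lambda>(w,x). w @ [x]) ` (?W n \<times> A n)"
  proof
    show "?W (Suc n) \<subseteq> (\<lambda>(w,x). w @ [x]) ` (?W n \<times> A n)"
    proof
      fix w assume w: "w \<in> ?W (Suc n)"
      then have "w \<noteq> []" by auto
      then have w_eq: "w = butlast w @ [last w]" by simp
      have "butlast w \<in> ?W n" using w by (auto simp: nth_butlast)
      moreover have "last w \<in> A n" using w \<open>w \<noteq> []\<close> by (auto simp: last_conv_nth)
      ultimately show "w \<in> (\<lambda>(w,x). w @ [x]) ` (?W n \<times> A n)"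
        using w_eq by (intro image_eqI[of _ _ "(butlast w, last w)"]) auto
    qed
  next
    show "(\<lambda>(w,x). w @ [x]) ` (?W n \<times> A n) \<subseteq> ?W (Suc n)"
      by (auto simp: nth_append less_Suc_eq)
  qed
  have inj: "inj_on (\<lambda>(w,x). w @ [x]) (?W n \<times> A n)"
    by (auto simp: inj_on_def)
  have "card (?W (Suc n)) = card (?W n \<times> A n)"
    unfolding eq by (rule card_image[OF inj])
  also have "\<dots> = card (?W n) * card (A n)" by (rule card_cartesian_product)
  finally have c: "card (?W (Suc n)) = (\<Prod>k<Suc n. card (A k))" using Suc by simp
  have "finite (?W (Suc n))" unfolding eq using Suc assms by auto
  with c show ?case by blast
qed

lemma card_cube: "card (cube d) = 2^d"
proof -
  have "cube d = {xs. set xs \<subseteq> {0,1} \<and> length xs = d}" by (auto simp: cube_def)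
  then show ?thesis by (simp add: card_lists_length_eq) (simp add: numeral_2_eq_2)
qed

lemma finite_cube: "finite (cube d)"
proof -
  have "cube d = {xs. set xs \<subseteq> {0,1} \<and> length xs = d}" by (auto simp: cube_def)
  then show ?thesis by (simp add: finite_lists_length_eq)
qed

lemma Lseq_finite: "finite (Lseq U V d \<omega> k)"
  by (simp add: Lseq_def Let_def I_one_def I_full_def finite_cube)

lemma Lseq_card: "1 \<le> card (Lseq U V d \<omega> k) \<and> card (Lseq U V d \<omega> k) \<le> 2^d"
proof -
  have "replicate d 0 \<in> cube d" by (auto simp: cube_def)
  then have "1 \<le> card (cube d)" using finite_cube by (metis card_0_eq empty_iff less_one not_le)
  then show ?thesis by (auto simp: Lseq_def Let_def I_one_def I_full_def card_cube)
qed

lemma words_card: "finite (words U V d \<omega> n) \<and> card (words U V d \<omega> n) = (\<Prod>k<n. card (Lseq U V d \<omega> k))"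
  unfolding words_def by (rule words_gen_card) (rule Lseq_finite)

lemma blk_start_Suc: "blk_start U V \<omega> (Suc i) = blk_start U V \<omega> i + U (\<omega> i) + V (\<omega> i)"
  by (simp add: blk_start_def)

lemma blk_start_mono: "i \<le> j \<Longrightarrow> blk_start U V \<omega> i \<le> blk_start U V \<omega> j"
  unfolding blk_start_def by (rule sum_mono2) auto

lemma blk_index_eq:
  assumes "blk_start U V \<omega> i \<le> k" "k < blk_start U V \<omega> (Suc i)"
  shows "blk_index U V \<omega> k = i"
  unfolding blk_index_def
proof (rule Least_equality)
  show "k < blk_start U V \<omega> (Suc i)" by (rule assms(2))
next
  fix y assume y: "k < blk_start U V \<omega> (Suc y)"
  show "i \<le> y"
  proof (rule ccontr)
    assume "\<not> i \<le> y"
    then have "Suc y \<le> i" by simp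
    then have "blk_start U V \<omega> (Suc y) \<le> blk_start U V \<omega> i" by (rule blk_start_mono)
    with y assms(1) show False by simp
  qed
qed

lemma Lseq_one:
  assumes "blk_start U V \<omega> i \<le> k" "k < blk_start U V \<omega> i + U (\<omega> i)"
  shows "card (Lseq U V d \<omega> k) = 1"
proof -
  have "blk_index U V \<omega> k = i" using assms by (intro blk_index_eq) (auto simp: blk_start_Suc)
  then show ?thesis using assms by (simp add: Lseq_def I_one_def)
qed

lemma words_card_bound:
  fixes i :: nat and U V :: "nat \<Rightarrow> nat" and \<omega> :: "nat \<Rightarrow> nat"
  defines "n \<equiv> blk_start U V \<omega> i + U (\<omega> i)"
  shows "finite (words U V d \<omega> n) \<and> 1 \<le> card (words U V d \<omega> n) \<and>
         card (words U V d \<omega> n) \<le> (2^d)^(blk_start U V \<omega> i)"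
proof -
  let ?S = "blk_start U V \<omega> i"
  have c: "card (words U V d \<omega> n) = (\<Prod>k<n. card (Lseq U V d \<omega> k))" using words_card by blast
  have "(\<Prod>k<n. card (Lseq U V d \<omega> k)) \<le> (\<Prod>k<n. if k < ?S then 2^d else 1)"
  proof (rule prod_mono)
    fix k assume "k \<in> {..<n}"
    then show "0 \<le> card (Lseq U V d \<omega> k) \<and> card (Lseq U V d \<omega> k) \<le> (if k < ?S then 2^d else 1)"
      using Lseq_card[of U V d \<omega> k] Lseq_one[of U V \<omega> i k d] by (auto simp: n_def)
  qed
  also have "(\<Prod>k<n. if k < ?S then (2::nat)^d else 1) = (\<Prod>k\<in>{k\<in>{..<n}. k < ?S}. 2^d)"
    by (rule prod.inter_filter[symmetric]) simp
  also have "{k\<in>{..<n}. k < ?S} = {..<?S}" by (auto simp: n_def)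
  finally have up: "card (words U V d \<omega> n) \<le> (2^d)^?S" using c by simp
  have "1 \<le> (\<Prod>k<n. card (Lseq U V d \<omega> k))"
    using Lseq_card by (intro prod_ge_1) auto
  then show ?thesis using up c words_card by auto
qed

lemma liminf_le_crit:
  fixes f :: "nat \<Rightarrow> real"
  assumes "\<And>e N. e > 0 \<Longrightarrow> \<exists>n\<ge>N. f n \<le> c + e"
  shows "liminf (\<lambda>n. ereal (f n)) \<le> ereal c"
proof -
  have "liminf (\<lambda>n. ereal (f n)) = (SUP N. INF m\<in>{N..}. ereal (f m))" by (rule liminf_SUP_INF)
  also have "\<dots> \<le> ereal c"
  proof (rule SUP_least)
    fix N
    show "(INF m\<in>{N..}. ereal (f m)) \<le> ereal c"
    proof (rule ereal_le_epsilon2)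
      fix e :: real assume "0 < e"
      then obtain n where n: "n \<ge> N" "f n \<le> c + e" using assms by blast
      then have "(INF m\<in>{N..}. ereal (f m)) \<le> ereal (f n)" by (intro INF_lower) simp
      also have "\<dots> \<le> ereal c + ereal e" using n by simp
      finally show "(INF m\<in>{N..}. ereal (f m)) \<le> ereal c + ereal e" .
    qed
  qed
  finally show ?thesis .
qed

section \<open>Growth of U\<close>

context
  fixes U V :: "nat \<Rightarrow> nat"
  assumes fr: "is_frame U V"
begin

lemma fr_U1: "n \<ge> 1 \<Longrightarrow> U n \<ge> 1" and fr_V: "n \<ge> 1 \<Longrightarrow> n * U n \<le> V n"
  and fr_step: "n \<ge> 1 \<Longrightarrow> (U n + V n)^3 \<le> U (Suc n)"
  using fr by (auto simp: is_frame_def)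

lemma cube_ge: "(x::nat) \<le> x^3"
  by (cases x) (auto simp: power3_eq_cube)

lemma U_step_mono: "n \<ge> 1 \<Longrightarrow> U n \<le> U (Suc n)"
  using fr_step[of n] cube_ge[of "U n + V n"] by linarith

lemma U_mono: assumes "1 \<le> a" "a \<le> b" shows "U a \<le> U b"
  using assms(2)
proof (induction b rule: dec_induct)
  case base then show ?case by simp
next
  case (step n) then show ?case using U_step_mono[of n] assms(1) by linarith
qed

lemma U_ge: assumes "n \<ge> 1" shows "n \<le> U n"
proof (cases "n = 1")
  case True then show ?thesis using fr_U1[of 1] by simp
next
  case False
  then obtain k where k: "n = Suc k" "k \<ge> 1" using assms by (cases n) auto
  have "k \<le> k * U k" using fr_U1[OF k(2)] by simp
  also have "\<dots> \<le> V k" by (rule fr_V[OF k(2)])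
  finally have "Suc k \<le> U k + V k" using fr_U1[OF k(2)] by linarith
  also have "\<dots> \<le> (U k + V k)^3" by (rule cube_ge)
  also have "\<dots> \<le> U (Suc k)" by (rule fr_step[OF k(2)])
  finally show ?thesis using k by simp
qed

lemma U_big: "k \<ge> 1 \<Longrightarrow> (k*k)^3 \<le> U (Suc k)"
proof -
  assume k: "k \<ge> 1"
  have "k * k \<le> k * U k" using U_ge[OF k] by simp
  also have "\<dots> \<le> V k" using fr_V[OF k] .
  finally have "(k*k)^3 \<le> (U k + V k)^3" by (intro power_mono) auto
  also have "\<dots> \<le> U (Suc k)" using fr_step[OF k] .
  finally show ?thesis .
qed

lemma growth: "n \<ge> 1 \<Longrightarrow> n > 64 * A^3 \<Longrightarrow> (A * (Suc n)^2)^3 < U (Suc n)^2"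
proof -
  assume n: "n \<ge> 1" "n > 64 * A^3"
  have "Suc n \<le> 2 * n" using n by simp
  then have "(Suc n)^6 \<le> (2*n)^6" by (rule power_mono) simp
  then have h1: "(Suc n)^6 \<le> 64 * n^6" by (simp add: power_mult_distrib)
  have "(A * (Suc n)^2)^3 = A^3 * (Suc n)^6" by (simp add: power_mult_distrib power_mult[symmetric])
  also have "\<dots> \<le> A^3 * (64 * n^6)" using h1 by simp
  also have "\<dots> = (64 * A^3) * n^6" by simp
  also have "\<dots> < n * n^6" using n by (intro mult_strict_right_mono) auto
  also have "\<dots> \<le> (n^6)^2"
  proof -
    have "n \<le> n^6" using n by (simp add: self_le_power)
    then have "n * n^6 \<le> n^6 * n^6" by (rule mult_right_mono) simp
    then show ?thesis by (simp add: power2_eq_square)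
  qed
  also have "\<dots> \<le> U (Suc n)^2"
    using U_big[OF n(1)] by (intro power_mono) (auto simp: power_mult_distrib power_mult[symmetric] power2_eq_square)
  finally show ?thesis .
qed


lemma prob_B_eps:
  assumes eps: "\<epsilon> > 0"
  shows "measure Pmeas {\<omega>. \<exists>i\<ge>N. (\<forall>j<i. \<omega> j < \<omega> i) \<and> ((Suc r)*i)^3 < U(\<omega> i)^2} \<ge> 1 - \<epsilon>"
    (is "measure Pmeas ?B \<ge> _")
proof -
  define K where "K = nat \<lceil>2*Cconst/\<epsilon>\<rceil> + N"
  define A where "A = Suc r * K"
  have "\<forall>\<^sub>F m in sequentially. q m < \<epsilon> / (2 * (N+1))"
    using q_lim eps by (intro order_tendstoD(2)) auto
  moreover have "\<forall>\<^sub>F m in sequentially. 64 * A^3 + 2 \<le> m"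
    by (rule eventually_ge_at_top)
  ultimately have "\<forall>\<^sub>F m in sequentially. q m < \<epsilon> / (2 * (N+1)) \<and> 64 * A^3 + 2 \<le> m"
    by (rule eventually_conj)
  then obtain m where m1: "q m < \<epsilon> / (2 * (N+1))" and m2: "64 * A^3 + 2 \<le> m"
    by (auto simp: eventually_sequentially)
  obtain n where n: "m = Suc n" "n \<ge> 1" "n > 64 * A^3" using m2 by (cases m) auto
  define T where "T = K * m^2"
  have mpos: "m > 0" using n by simp
  have NK: "N \<le> K" unfolding K_def by simp
  have "1 \<le> m^2" using mpos by simp
  then have "K * 1 \<le> K * m^2" by (rule mult_left_mono) simp
  then have NT: "N \<le> T" unfolding T_def using NK by linarith
  define A1 where "A1 = {\<omega>::nat\<Rightarrow>nat. \<forall>j<N. \<omega> j < m}"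
  define A2 where "A2 = {\<omega>::nat\<Rightarrow>nat. \<forall>j<T. \<omega> j < m}"
  have A21: "A2 \<subseteq> A1" using NT by (auto simp: A1_def A2_def)
  have sA1: "A1 \<in> sets Pmeas" and sA2: "A2 \<in> sets Pmeas" unfolding A1_def A2_def by (rule meas_allN)+
  have sB: "?B \<in> sets Pmeas" by (rule meas_B)
  have EB: "A1 - A2 \<subseteq> ?B"
  proof
    fix \<omega> assume "\<omega> \<in> A1 - A2"
    then have w1: "\<forall>j<N. \<omega> j < m" and "\<exists>j<T. m \<le> \<omega> j" by (auto simp: A1_def A2_def not_less)
    then obtain j0 where j0: "j0 < T" "m \<le> \<omega> j0" by blast
    define i where "i = (LEAST j. m \<le> \<omega> j)"
    have i1: "m \<le> \<omega> i" unfolding i_def by (rule LeastI[of _ j0]) (rule j0(2))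
    have i2: "\<forall>j<i. \<omega> j < m"
    proof (intro allI impI)
      fix j assume "j < i"
      then have "\<not> m \<le> \<omega> j" unfolding i_def by (rule not_less_Least)
      then show "\<omega> j < m" by simp
    qed
    have "i \<le> j0" unfolding i_def by (rule Least_le) (rule j0(2))
    then have i3: "i < T" using j0 by simp
    have i4: "N \<le> i"
    proof (rule ccontr)
      assume "\<not> N \<le> i"
      then have "\<omega> i < m" using w1 by simp
      with i1 show False by simp
    qed
    have "Suc r * i \<le> Suc r * T" using i3 by (intro mult_left_mono) auto
    also have "\<dots> = A * (Suc n)^2" by (simp add: A_def T_def n(1) algebra_simps)
    finally have "(Suc r * i)^3 \<le> (A * (Suc n)^2)^3" by (rule power_mono) simp
    also have "\<dots> < U (Suc n)^2" by (rule growth) (use n in auto)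
    also have "\<dots> \<le> U (\<omega> i)^2" using i1 n by (intro power_mono U_mono) auto
    finally have "(Suc r * i)^3 < U (\<omega> i)^2" .
    moreover have "\<forall>j<i. \<omega> j < \<omega> i" using i2 i1 less_le_trans by blast
    ultimately show "\<omega> \<in> ?B" using i4 by blast
  qed
  let ?x = "q m"
  have x0: "0 \<le> ?x" and x1: "?x \<le> 1" by (rule q_nonneg, rule q_le1)
  have pA1: "measure Pmeas A1 = (1 - ?x)^N" unfolding A1_def by (simp add: meas_all_lt q_compl)
  have pA2: "measure Pmeas A2 = (1 - ?x)^T" unfolding A2_def by (simp add: meas_all_lt q_compl)
  have "N * ?x \<le> N * (\<epsilon> / (2 * (N+1)))" using m1 by (intro mult_left_mono) auto
  also have "\<dots> \<le> \<epsilon> / 2" using eps by (simp add: divide_simps)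
  finally have c1: "(1 - ?x)^N \<ge> 1 - \<epsilon>/2" using real_ineq1[OF x0 x1, of N] by linarith
  have "T * ?x \<ge> T * pw m" using q_ge by (intro mult_left_mono) auto
  also have "T * pw m = K / Cconst" using mpos Cconst_pos by (simp add: T_def pw_def field_simps)
  finally have Tx: "T * ?x \<ge> K / Cconst" .
  have "real K \<ge> 2*Cconst/\<epsilon>" unfolding K_def by linarith
  then have "K / Cconst \<ge> 2 / \<epsilon>" using Cconst_pos eps by (simp add: field_simps)
  with Tx have Tx2: "T * ?x \<ge> 2 / \<epsilon>" by linarith
  have "(1 - ?x)^T * (1 + T * ?x) \<le> 1" by (rule real_ineq2[OF x0 x1])
  moreover have "0 < 1 + T * ?x" using x0 by (simp add: add_pos_nonneg)
  ultimately have "(1 - ?x)^T \<le> 1 / (1 + T * ?x)" by (simp add: le_divide_eq)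
  also have "\<dots> \<le> 1 / (1 + 2/\<epsilon>)"
  proof (rule divide_left_mono)
    have "0 < 2/\<epsilon>" using eps by simp
    then show "0 < (1 + T * ?x) * (1 + 2/\<epsilon>)" using Tx2 by (intro mult_pos_pos) linarith+
  qed (use Tx2 in auto)
  also have "\<dots> = \<epsilon> / (\<epsilon> + 2)" using eps by (simp add: field_simps)
  also have "\<dots> \<le> \<epsilon> / 2" using eps by (intro divide_left_mono) auto
  finally have c2: "(1 - ?x)^T \<le> \<epsilon>/2" .
  have "measure Pmeas (A1 - A2) = measure Pmeas A1 - measure Pmeas A2"
    unfolding Pmeas_eq by (rule PP.P.finite_measure_Diff) (use sA1 sA2 A21 in \<open>auto simp: Pmeas_eq\<close>)
  also have "\<dots> \<ge> 1 - \<epsilon>" using c1 c2 pA1 pA2 by linarith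
  finally have "1 - \<epsilon> \<le> measure Pmeas (A1 - A2)" .
  also have "\<dots> \<le> measure Pmeas ?B"
    unfolding Pmeas_eq by (rule PP.P.finite_measure_mono) (use EB sB in \<open>auto simp: Pmeas_eq\<close>)
  finally show ?thesis .
qed

lemma AE_B: "AE \<omega> in Pmeas. \<exists>i\<ge>N. (\<forall>j<i. \<omega> j < \<omega> i) \<and> ((Suc r)*i)^3 < U(\<omega> i)^2"
proof -
  let ?B = "{\<omega>. \<exists>i\<ge>N. (\<forall>j<i. \<omega> j < \<omega> i) \<and> ((Suc r)*i)^3 < U(\<omega> i)^2}"
  have "measure Pmeas ?B \<ge> 1"
  proof (rule field_le_epsilon)
    fix e :: real assume "e > 0"
    then show "1 \<le> measure Pmeas ?B + e" using prob_B_eps[where \<epsilon>=e and N=N and r=r] by linarith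
  qed
  moreover have "measure Pmeas ?B \<le> 1" unfolding Pmeas_eq by (rule PP.P.prob_le_1)
  ultimately have "measure Pmeas ?B = 1" by linarith
  then have "AE \<omega> in Pmeas. \<omega> \<in> ?B" unfolding Pmeas_eq by (rule PP.P.AE_prob_1)
  then show ?thesis by simp
qed


lemma ratio:
  assumes pos: "\<forall>j. 1 \<le> \<omega> j" and rec: "\<forall>j<i. \<omega> j < \<omega> i"
    and cond: "(Suc r * i)^3 < U (\<omega> i)^2"
  shows "Suc r * blk_start U V \<omega> i < U (\<omega> i)" and "i < U (\<omega> i)"
proof -
  define Y where "Y = U (\<omega> i)"
  have Ypos: "0 < Y"
  proof (rule ccontr)
    assume "\<not> 0 < Y"
    then have "Y = 0" by simp
    with cond show False by (simp add: Y_def)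
  qed
  have "i^2 \<le> i^3" by (cases i) (auto simp: power2_eq_square power3_eq_cube)
  also have "\<dots> \<le> (Suc r * i)^3" by (intro power_mono) auto
  also have "\<dots> < Y^2" using cond by (simp add: Y_def)
  finally have "i^2 < Y^2" .
  then show "i < U (\<omega> i)" unfolding Y_def by (rule power_less_imp_less_base) simp
  show "Suc r * blk_start U V \<omega> i < U (\<omega> i)"
  proof (cases "i = 0")
    case True then show ?thesis using Ypos by (simp add: blk_start_def Y_def)
  next
    case False
    define X where "X j = U (\<omega> j) + V (\<omega> j)" for j
    have X3: "X j ^ 3 \<le> Y" if "j < i" for j
    proof -
      have "X j ^ 3 \<le> U (Suc (\<omega> j))" unfolding X_def by (rule fr_step) (use pos in auto)
      also have "\<dots> \<le> Y" unfolding Y_def by (rule U_mono) (use rec that in auto)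
      finally show ?thesis .
    qed
    define Xm where "Xm = Max (X ` {..<i})"
    have Xm_in: "Xm \<in> X ` {..<i}" unfolding Xm_def using False by (intro Max_in) auto
    then have Xm3: "Xm ^ 3 \<le> Y" using X3 by auto
    have Xm1: "1 \<le> Xm" using Xm_in fr_U1 pos by (auto simp: X_def) (metis add_increasing2 le0)
    have "blk_start U V \<omega> i = (\<Sum>j<i. X j)" by (simp add: blk_start_def X_def)
    also have "\<dots> \<le> of_nat (card {..<i}) * Xm" by (rule sum_bounded_above) (auto simp: Xm_def)
    finally have Sle: "blk_start U V \<omega> i \<le> i * Xm" by simp
    have "(Suc r * i * Xm)^3 = (Suc r * i)^3 * Xm^3" by (simp add: power_mult_distrib)
    also have "\<dots> < Y^2 * Xm^3" using cond Xm1 by (intro mult_strict_right_mono) (auto simp: Y_def)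
    also have "\<dots> \<le> Y^2 * Y" using Xm3 by (intro mult_left_mono) auto
    also have "\<dots> = Y^3" by (simp add: power2_eq_square power3_eq_cube)
    finally have "Suc r * i * Xm < Y" by (rule power_less_imp_less_base) simp
    moreover have "Suc r * blk_start U V \<omega> i \<le> Suc r * (i * Xm)" using Sle by (rule mult_left_mono) simp
    then have "Suc r * blk_start U V \<omega> i \<le> Suc r * i * Xm" by (simp only: mult.assoc)
    ultimately show ?thesis by (simp add: Y_def)
  qed
qed


lemma value_bound:
  fixes t :: real
  assumes t: "t \<ge> 0" and pos: "\<forall>j. 1 \<le> \<omega> j" and rec: "\<forall>j<i. \<omega> j < \<omega> i"
    and cond: "(Suc r * i)^3 < U (\<omega> i)^2"
  defines "n \<equiv> blk_start U V \<omega> i + U (\<omega> i)"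
  shows "i < n" and
    "ln (\<Sum>w\<in>words U V d \<omega> n. 2 powr (- real n * t)) / real n \<le> real d * ln 2 / real (Suc r) - t * ln 2"
proof -
  let ?S = "blk_start U V \<omega> i"
  have r1: "Suc r * ?S < U (\<omega> i)" and r2: "i < U (\<omega> i)" using ratio[OF pos rec cond] by auto
  show "i < n" using r2 by (simp add: n_def)
  have npos: "0 < n" using r2 by (simp add: n_def)
  have rS: "Suc r * ?S \<le> n" using r1 by (simp add: n_def)
  obtain c where c: "c = card (words U V d \<omega> n)" by simp
  have cb: "1 \<le> c" "c \<le> (2^d)^?S" using words_card_bound[where U=U and V=V and \<omega>=\<omega> and i=i and d=d] c by (auto simp: n_def)
  have "(\<Sum>w\<in>words U V d \<omega> n. 2 powr (- real n * t)) = real c * 2 powr (- real n * t)"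
    by (simp add: c)
  then have eqS: "ln (\<Sum>w\<in>words U V d \<omega> n. 2 powr (- real n * t)) = ln (real c) + (- real n * t) * ln 2"
    using cb by (simp add: ln_mult)
  have cR: "real c \<le> real ((2^d)^?S)" using cb(2) of_nat_le_iff by blast
  have "ln (real c) \<le> ln (real ((2^d)^?S))" using cb(1) cR by (subst ln_le_cancel_iff) auto
  also have "ln (real ((2^d)^?S)) = real d * real ?S * ln 2" by (simp add: ln_realpow power_mult[symmetric])
  finally have le1: "ln (real c) \<le> real d * real ?S * ln 2" .
  have L: "ln (\<Sum>w\<in>words U V d \<omega> n. 2 powr (- real n * t)) \<le> real d * ln 2 * real ?S - real n * t * ln 2"
    using eqS le1 by (simp add: algebra_simps)
  have "real ?S * real (Suc r) \<le> real n" using rS by (metis mult.commute of_nat_le_iff of_nat_mult)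
  then have Sn: "real ?S \<le> real n / real (Suc r)" by (simp add: field_simps)
  have dl: "0 \<le> real d * ln 2" by simp
  have "real d * ln 2 * real ?S - real n * t * ln 2 \<le> real d * ln 2 * (real n / real (Suc r)) - real n * t * ln 2"
    using mult_left_mono[OF Sn dl] by linarith
  also have "\<dots> = real n * (real d * ln 2 / real (Suc r) - t * ln 2)" by (simp add: algebra_simps)
  finally have "ln (\<Sum>w\<in>words U V d \<omega> n. 2 powr (- real n * t)) \<le> real n * (real d * ln 2 / real (Suc r) - t * ln 2)"
    using L by linarith
  then show "ln (\<Sum>w\<in>words U V d \<omega> n. 2 powr (- real n * t)) / real n \<le> real d * ln 2 / real (Suc r) - t * ln 2"
    using npos by (simp add: divide_le_eq mult.commute)
qed

lemma det:
  assumes pos: "\<forall>j. 1 \<le> \<omega> j"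
    and G: "\<forall>r N. \<exists>i\<ge>N. (\<forall>j<i. \<omega> j < \<omega> i) \<and> ((Suc r)*i)^3 < U(\<omega> i)^2"
  shows "\<forall>t::real. t \<ge> 0 \<longrightarrow>
           liminf (\<lambda>n. ereal (ln (\<Sum>w\<in>words U V d \<omega> n. 2 powr (- real n * t)) / real n))
             \<le> ereal (- t * ln 2)"
proof (intro allI impI)
  fix t :: real assume t: "t \<ge> 0"
  show "liminf (\<lambda>n. ereal (ln (\<Sum>w\<in>words U V d \<omega> n. 2 powr (- real n * t)) / real n)) \<le> ereal (- t * ln 2)"
  proof (rule liminf_le_crit)
    fix e :: real and N :: nat assume e: "e > 0"
    define r where "r = nat \<lceil>real d * ln 2 / e\<rceil>"
    have "real d * ln 2 / e \<le> real r" unfolding r_def by linarith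
    then have "real d * ln 2 \<le> e * real r" using e by (simp add: field_simps)
    also have "\<dots> \<le> e * real (Suc r)" using e by simp
    finally have dle: "real d * ln 2 / real (Suc r) \<le> e" by (simp add: field_simps)
    obtain i where i: "i \<ge> N" "\<forall>j<i. \<omega> j < \<omega> i" "((Suc r)*i)^3 < U(\<omega> i)^2"
      using G by blast
    define n0 where "n0 = blk_start U V \<omega> i + U (\<omega> i)"
    have vb: "ln (\<Sum>w\<in>words U V d \<omega> n0. 2 powr (- real n0 * t)) / real n0 \<le> real d * ln 2 / real (Suc r) - t * ln 2"
      unfolding n0_def by (rule value_bound(2)[OF t pos i(2) i(3)])
    have "i < n0" unfolding n0_def by (rule value_bound(1)[OF t pos i(2) i(3)])
    show "\<exists>n\<ge>N. ln (\<Sum>w\<in>words U V d \<omega> n. 2 powr (- real n * t)) / real n \<le> - t * ln 2 + e"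
    proof (intro exI[of _ n0] conjI)
      show "N \<le> n0" using i(1) \<open>i < n0\<close> by simp
      show "ln (\<Sum>w\<in>words U V d \<omega> n0. 2 powr (- real n0 * t)) / real n0 \<le> - t * ln 2 + e"
        using vb dle by linarith
    qed
  qed
qed

end

theorem mainTheorem3:
  fixes U V :: "nat \<Rightarrow> nat" and d :: nat
  assumes "d \<ge> 1" and "is_frame U V"
  shows "AE \<omega> in Pmeas. \<forall>t::real. t \<ge> 0 \<longrightarrow>
           liminf (\<lambda>n. ereal (ln (\<Sum>w\<in>words U V d \<omega> n. 2 powr (- real n * t)) / real n))
             \<le> ereal (- t * ln 2)"
proof -
  have A1: "AE \<omega> in Pmeas. \<forall>j. 1 \<le> \<omega> j" by (rule AE_pos)
  have A2: "AE \<omega> in Pmeas. \<forall>r N. \<exists>i\<ge>N. (\<forall>j<i. \<omega> j < \<omega> i) \<and> ((Suc r)*i)^3 < U(\<omega> i)^2"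
    using AE_B[OF assms(2)] by (simp add: AE_all_countable)
  from A1 A2 show ?thesis
    by eventually_elim (rule det[OF assms(2)])
qed

end
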